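(* Let $A=(a_1,\ldots,a_q)\in\mathbb{R}^{p\times q}$ be entrywise nonnegative, $\eta_1,\eta_2>0$, $\gamma>0$, $\mathcal{C}=\{(W,X)\in\mathbb{R}^{p\times n}\times\mathbb{R}^{n\times q}\mid W\ge0,\ X\ge0\}$ (entrywise), and let $(W^*,X^* )$ be a d-stationary point of $$\min_{W,X}\ \tfrac12\|A-WX\|_F^2+\tfrac{\eta_1}{2}\|W\|_F^2+\tfrac{\eta_2}{2}\|X\|_F^2+\gamma\sum_{j\in[q]}T_{1,n,1}(x_j)+\delta_{\mathcal C}(W,X),$$ where $x_j$ is the $j$-th column of $X$. If $$\gamma>\max_{j\in[q]}\frac{\|a_j\|_2}{\sqrt2}\Big(\frac{\|A\|_F}{\sqrt{\eta_1}}+\sqrt{\eta_2}\Big),$$ then $T_{1,n,1}(x_j^* )=0$ (i.e., $x_j^*$ has at most one nonzero entry) for all $j\in[q]$.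
   Context: $T_{1,n,1}(x)$ is the sum of the $n-1$ smallest values among $|x_1|,\ldots,|x_n|$. $\delta_{\mathcal C}$ is the indicator function of $\mathcal C$. Feasible cone $\mathcal{F}(z;\mathcal{C})=\{d\mid \exists\varsigma'>0:\ z+\varsigma d\in\mathcal{C}\ \forall\varsigma\in(0,\varsigma')\}$. A point of $\mathcal C$ is d-stationary if the directional derivative of the objective there is $\ge0$ in every direction of $\mathcal{F}(\cdot;\mathcal{C})$. *)

theory Defs
  imports "HOL-Analysis.Analysis"
begin

text \<open>Matrices are represented as functions nat => nat => real, with entries
 meaningful only for indices below the given dimensions.\<close>

type_synonym mat = "nat \<Rightarrow> nat \<Rightarrow> real"

definition T1n1 :: "nat \<Rightarrow> (nat \<Rightarrow> real) \<Rightarrow> real" where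
  "T1n1 n x = sum_list (take (n - 1) (sort (map (\<lambda>i. \<bar>x i\<bar>) [0..<n])))"

definition frob :: "nat \<Rightarrow> nat \<Rightarrow> mat \<Rightarrow> real" where
  "frob r c M = sqrt (\<Sum>i<r. \<Sum>j<c. (M i j)\<^sup>2)"

definition colnorm :: "nat \<Rightarrow> mat \<Rightarrow> nat \<Rightarrow> real" where
  "colnorm r M j = sqrt (\<Sum>i<r. (M i j)\<^sup>2)"

definition matmul :: "nat \<Rightarrow> mat \<Rightarrow> mat \<Rightarrow> mat" where
  "matmul n W X = (\<lambda>i j. \<Sum>k<n. W i k * X k j)"

text \<open>Finite-valued part of the objective (everything except the indicator of C).\<close>
definition objF :: "nat \<Rightarrow> nat \<Rightarrow> nat \<Rightarrow> mat \<Rightarrow> real \<Rightarrow> real \<Rightarrow> real \<Rightarrow> mat \<times> mat \<Rightarrow> real" where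
  "objF p n q A \<eta>1 \<eta>2 \<gamma> z =
     (let W = fst z; X = snd z;
          R = (\<lambda>i j. A i j - matmul n W X i j) in
      (frob p q R)\<^sup>2 / 2 + \<eta>1 / 2 * (frob p n W)\<^sup>2 + \<eta>2 / 2 * (frob n q X)\<^sup>2
      + \<gamma> * (\<Sum>j<q. T1n1 n (\<lambda>k. X k j)))"

definition consC :: "nat \<Rightarrow> nat \<Rightarrow> nat \<Rightarrow> (mat \<times> mat) set" where
  "consC p n q = {(W, X). (\<forall>i<p. \<forall>k<n. W i k \<ge> 0) \<and> (\<forall>k<n. \<forall>j<q. X k j \<ge> 0)}"

definition zstep :: "mat \<times> mat \<Rightarrow> real \<Rightarrow> mat \<times> mat \<Rightarrow> mat \<times> mat" where
  "zstep z s d = ((\<lambda>i k. fst z i k + s * fst d i k), (\<lambda>k j. snd z k j + s * snd d k j))"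

definition feas_cone :: "(mat \<times> mat) set \<Rightarrow> mat \<times> mat \<Rightarrow> (mat \<times> mat) set" where
  "feas_cone C z = {d. \<exists>s'>0. \<forall>s. 0 < s \<and> s < s' \<longrightarrow> zstep z s d \<in> C}"

definition has_dirderiv :: "(mat \<times> mat \<Rightarrow> real) \<Rightarrow> mat \<times> mat \<Rightarrow> mat \<times> mat \<Rightarrow> real \<Rightarrow> bool" where
  "has_dirderiv f z d D \<longleftrightarrow> ((\<lambda>s. (f (zstep z s d) - f z) / s) \<longlongrightarrow> D) (at_right 0)"

text \<open>Along d in F(z;C) the indicator is 0
 for all small s > 0 (and at z), so the directional derivative of f + indicator(C)
 coincides with that of f.\<close>
definition d_stationary :: "(mat \<times> mat \<Rightarrow> real) \<Rightarrow> (mat \<times> mat) set \<Rightarrow> mat \<times> mat \<Rightarrow> bool" where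
  "d_stationary f C z \<longleftrightarrow> z \<in> C \<and>
     (\<forall>d \<in> feas_cone C z. \<exists>D. has_dirderiv f z d D \<and> D \<ge> 0)"

end

theory Submission
  imports Defs "HOL-Library.Multiset"
begin

lemma sorted_le_last: "sorted S \<Longrightarrow> S \<noteq> [] \<Longrightarrow> y \<in> set S \<Longrightarrow> y \<le> last S"
  by (induction S rule: induct_list012) auto

lemma T1n1_eq:
  assumes "n \<ge> 1"
  shows "T1n1 n x = (\<Sum>i<n. \<bar>x i\<bar>) - Max ((\<lambda>i. \<bar>x i\<bar>) ` {..<n})"
proof -
  define L where "L = map (\<lambda>i. \<bar>x i\<bar>) [0..<n]"
  define S where "S = sort L"
  have len: "length S = n" unfolding S_def L_def by simp
  hence ne: "S \<noteq> []" using assms by auto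
  have split: "S = take (n-1) S @ [last S]"
    using ne len by (metis append_butlast_last_id butlast_conv_take)
  have "sum_list S = sum_list L" unfolding S_def
    by (metis mset_sort sum_mset_sum_list)
  also have "\<dots> = (\<Sum>i<n. \<bar>x i\<bar>)" unfolding L_def
    by (simp add: sum_list_distinct_conv_sum_set atLeast0LessThan)
  finally have s1: "sum_list (take (n-1) S) + last S = (\<Sum>i<n. \<bar>x i\<bar>)"
    using split by (metis sum_list_append sum_list.Cons sum_list.Nil add_0_right)
  have setS: "set S = (\<lambda>i. \<bar>x i\<bar>) ` {..<n}" unfolding S_def L_def by auto
  have "last S = Max (set S)"
  proof (rule sym, rule Max_eqI)
    show "finite (set S)" by simp
    show "y \<le> last S" if "y \<in> set S" for y
      using sorted_le_last[OF _ ne that] S_def by simp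
    show "last S \<in> set S" using ne by simp
  qed
  thus ?thesis using s1 setS unfolding T1n1_def L_def[symmetric] S_def[symmetric] by simp
qed

lemma frob_sq: "(frob r c M)\<^sup>2 = (\<Sum>i<r. \<Sum>j<c. (M i j)\<^sup>2)"
  unfolding frob_def by (simp add: sum_nonneg)

lemma dir_le:
  assumes "d_stationary f C z" "d \<in> feas_cone C z" "e > 0"
    "\<forall>s. 0 < s \<and> s < e \<longrightarrow> (f (zstep z s d) - f z) / s \<le> g s"
    "(g \<longlongrightarrow> L) (at_right 0)"
  shows "0 \<le> L"
proof -
  obtain D where D: "has_dirderiv f z d D" "D \<ge> 0"
    using assms(1,2) unfolding d_stationary_def by blast
  have ev: "eventually (\<lambda>s. (f (zstep z s d) - f z) / s \<le> g s) (at_right (0::real))"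
    unfolding eventually_at_right_field using assms(3,4) by auto
  have "D \<le> L"
    using tendsto_le[OF trivial_limit_at_right_real assms(5) D(1)[unfolded has_dirderiv_def] ev] .
  thus ?thesis using D by simp
qed

lemma test1:
  fixes P R :: "nat \<Rightarrow> nat \<Rightarrow> real"
  assumes "s \<noteq> 0"
  shows "(\<Sum>i<p. \<Sum>j<q. (A i j - (1-s) * P i j)\<^sup>2) = (\<Sum>i<p. \<Sum>j<q. (A i j - P i j)\<^sup>2) + 2 * s * (\<Sum>i<p. \<Sum>j<q. (A i j - P i j) * P i j + s/2 * (P i j)\<^sup>2)"
proof -
  have "\<And>i j. (A i j - (1-s) * P i j)\<^sup>2 = (A i j - P i j)\<^sup>2 + 2 * s * ((A i j - P i j) * P i j + s/2 * (P i j)\<^sup>2)"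
    by (simp add: power2_eq_square algebra_simps)
  hence "(\<Sum>i<p. \<Sum>j<q. (A i j - (1-s) * P i j)\<^sup>2) = (\<Sum>i<p. \<Sum>j<q. (A i j - P i j)\<^sup>2 + 2 * s * ((A i j - P i j) * P i j + s/2 * (P i j)\<^sup>2))"
    by simp
  also have "\<dots> = (\<Sum>i<p. \<Sum>j<q. (A i j - P i j)\<^sup>2) + (\<Sum>i<p. \<Sum>j<q. 2 * s * ((A i j - P i j) * P i j + s/2 * (P i j)\<^sup>2))"
    by (simp add: sum.distrib)
  also have "\<dots> = (\<Sum>i<p. \<Sum>j<q. (A i j - P i j)\<^sup>2) + 2 * s * (\<Sum>i<p. \<Sum>j<q. (A i j - P i j) * P i j + s/2 * (P i j)\<^sup>2)"
    by (simp only: sum_distrib_left)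
  finally show ?thesis .
qed

lemma test2:
  fixes W X :: mat
  assumes "k < n"
  shows "matmul n (\<lambda>i k'. W i k' + s * 0) (\<lambda>k' j'. X k' j' + s * (if k' = k \<and> j' = j then -1 else 0)) i j'
     = matmul n W X i j' - s * (if j' = j then W i k else 0)"
proof -
  have md: "\<And>a c P. (a::real) * (if P then c else 0) = (if P then a*c else 0)" by simp
  show ?thesis using assms by (simp add: md matmul_def distrib_left sum.distrib if_distrib[where f="\<lambda>x. s * x"] cong: if_cong)
qed

lemma test3: "((\<lambda>s::real. (\<Sum>i<p. \<Sum>j<q. (R i j) * P i j + s/2 * (P i j)\<^sup>2) + e1/2*(s-2)*SW) \<longlongrightarrow> (\<Sum>i<p. \<Sum>j<q. (R i j) * P i j) - e1 * SW) (at_right 0)"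
proof -
  have "((\<lambda>s::real. (\<Sum>i<p. \<Sum>j<q. (R i j) * P i j + s/2 * (P i j)\<^sup>2) + e1/2*(s-2)*SW) \<longlongrightarrow> (\<Sum>i<p. \<Sum>j<q. (R i j) * P i j + 0/2 * (P i j)\<^sup>2) + e1/2*(0-2)*SW) (at_right 0)"
    by (intro tendsto_intros) auto
  thus ?thesis by simp
qed
lemma step1:
  fixes p n q :: nat and A W X :: mat and \<eta>1 \<eta>2 \<gamma> :: real
  assumes stat: "d_stationary (objF p n q A \<eta>1 \<eta>2 \<gamma>) (consC p n q) (W, X)"
  shows "\<eta>1 * (\<Sum>i<p. \<Sum>k<n. (W i k)\<^sup>2) \<le> (\<Sum>i<p. \<Sum>j<q. (A i j)\<^sup>2) / 4"
proof -
  have inC: "(W, X) \<in> consC p n q" using stat unfolding d_stationary_def by blast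
  hence Wnn: "\<And>i k. i < p \<Longrightarrow> k < n \<Longrightarrow> W i k \<ge> 0" unfolding consC_def by auto
  define f where "f = objF p n q A \<eta>1 \<eta>2 \<gamma>"
  define P where "P = matmul n W X"
  define SW where "SW = (\<Sum>i<p. \<Sum>k<n. (W i k)\<^sup>2)"
  define SX where "SX = (\<Sum>k<n. \<Sum>j<q. (X k j)\<^sup>2)"
  define TT where "TT = (\<Sum>j<q. T1n1 n (\<lambda>k. X k j))"
  define d1 :: "mat \<times> mat" where "d1 = ((\<lambda>i k. - W i k), (\<lambda>k j. 0::real))"
  have f0: "f (W, X) = (\<Sum>i<p. \<Sum>j<q. (A i j - P i j)\<^sup>2) / 2 + \<eta>1/2 * SW + \<eta>2/2 * SX + \<gamma> * TT"
    by (simp add: f_def objF_def frob_sq P_def SW_def SX_def TT_def)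
  have d1f: "d1 \<in> feas_cone (consC p n q) (W, X)"
    unfolding feas_cone_def
  proof (intro CollectI exI[of _ 1] conjI allI impI)
    fix s :: real assume s: "0 < s \<and> s < 1"
    have "\<And>i k. i < p \<Longrightarrow> k < n \<Longrightarrow> 0 \<le> W i k + s * - W i k"
    proof -
      fix i k assume "i < p" "k < n"
      hence "0 \<le> (1 - s) * W i k" using Wnn s by simp
      thus "0 \<le> W i k + s * - W i k" by (simp add: algebra_simps)
    qed
    thus "zstep (W, X) s d1 \<in> consC p n q"
      using inC unfolding zstep_def d1_def consC_def by auto
  qed simp
  define g where "g = (\<lambda>s::real. (\<Sum>i<p. \<Sum>j<q. (A i j - P i j) * P i j + s/2 * (P i j)\<^sup>2) + \<eta>1/2*(s-2)*SW)"
  have q: "(f (zstep (W, X) s d1) - f (W, X)) / s \<le> g s" if s: "0 < s \<and> s < 1" for s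
  proof -
    have zs: "zstep (W, X) s d1 = ((\<lambda>i k. W i k - s * W i k), X)"
      by (simp add: zstep_def d1_def)
    have mm: "matmul n (\<lambda>i k. W i k - s * W i k) X i j = (1 - s) * P i j" for i j
    proof -
      have e: "\<And>k. (W i k - s * W i k) * X k j = (1 - s) * (W i k * X k j)" by (simp add: algebra_simps)
      show ?thesis unfolding matmul_def P_def sum_distrib_left by (intro sum.cong refl e)
    qed
    have ww: "(\<Sum>i<p. \<Sum>k<n. (W i k - s * W i k)\<^sup>2) = (1 - s)\<^sup>2 * SW"
    proof -
      have "\<And>i k. (W i k - s * W i k)\<^sup>2 = (1 - s)\<^sup>2 * (W i k)\<^sup>2" by (simp add: power2_eq_square algebra_simps)
      thus ?thesis by (simp add: SW_def sum_distrib_left)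
    qed
    have fs: "f (zstep (W, X) s d1) = (\<Sum>i<p. \<Sum>j<q. (A i j - (1 - s) * P i j)\<^sup>2) / 2 + \<eta>1/2 * ((1 - s)\<^sup>2 * SW) + \<eta>2/2 * SX + \<gamma> * TT"
      unfolding zs by (simp add: f_def objF_def frob_sq mm ww SX_def TT_def)
    have "f (zstep (W, X) s d1) - f (W, X) = s * g s"
    proof -
      define S0 where "S0 = (\<Sum>i<p. \<Sum>j<q. (A i j - P i j)\<^sup>2)"
      define Sg where "Sg = (\<Sum>i<p. \<Sum>j<q. (A i j - P i j) * P i j + s/2 * (P i j)\<^sup>2)"
      have t1: "(\<Sum>i<p. \<Sum>j<q. (A i j - (1 - s) * P i j)\<^sup>2) = S0 + 2 * s * Sg"
        unfolding S0_def Sg_def by (rule test1) (use s in simp)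
      have gs: "g s = Sg + \<eta>1/2*(s-2)*SW" unfolding g_def Sg_def by simp
      show ?thesis unfolding fs f0 gs t1 S0_def[symmetric]
        by (simp add: power2_eq_square field_simps)
    qed
    thus ?thesis using s by simp
  qed
  have lim: "(g \<longlongrightarrow> (\<Sum>i<p. \<Sum>j<q. (A i j - P i j) * P i j) - \<eta>1 * SW) (at_right 0)"
    unfolding g_def by (rule test3)
  have L: "0 \<le> (\<Sum>i<p. \<Sum>j<q. (A i j - P i j) * P i j) - \<eta>1 * SW"
    by (rule dir_le[OF stat[folded f_def] d1f _ _ lim, of 1]) (use q in auto)
  have "(\<Sum>i<p. \<Sum>j<q. (A i j - P i j) * P i j) \<le> (\<Sum>i<p. \<Sum>j<q. (A i j)\<^sup>2 / 4)"
  proof (intro sum_mono)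
    fix i j
    have "0 \<le> (A i j - 2 * P i j)\<^sup>2" by simp
    thus "(A i j - P i j) * P i j \<le> (A i j)\<^sup>2 / 4" by (simp add: power2_eq_square algebra_simps)
  qed
  also have "\<dots> = (\<Sum>i<p. \<Sum>j<q. (A i j)\<^sup>2) / 4" by (simp add: sum_divide_distrib)
  finally show ?thesis using L SW_def by simp
qed
lemma step2:
  fixes p n q :: nat and A W X :: mat and \<eta>1 \<eta>2 \<gamma> :: real and j k m :: nat
  assumes stat: "d_stationary (objF p n q A \<eta>1 \<eta>2 \<gamma>) (consC p n q) (W, X)"
    and jq: "j < q" and kn: "k < n" and mn: "m < n" and mk: "m \<noteq> k" and xpos: "X k j > 0" and gam: "\<gamma> > 0"
    and Mx: "\<bar>X m j\<bar> = Max ((\<lambda>i. \<bar>X i j\<bar>) ` {..<n})"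
  shows "\<gamma> \<le> (\<Sum>i<p. (A i j - matmul n W X i j) * W i k) - \<eta>2 * X k j"
proof -
  have inC: "(W, X) \<in> consC p n q" using stat unfolding d_stationary_def by blast
  hence Xnn: "\<And>k j. k < n \<Longrightarrow> j < q \<Longrightarrow> X k j \<ge> 0" unfolding consC_def by auto
  define f where "f = objF p n q A \<eta>1 \<eta>2 \<gamma>"
  define P where "P = matmul n W X"
  define SW where "SW = (\<Sum>i<p. \<Sum>k<n. (W i k)\<^sup>2)"
  define SX where "SX = (\<Sum>k<n. \<Sum>j<q. (X k j)\<^sup>2)"
  define S0 where "S0 = (\<Sum>i<p. \<Sum>j<q. (A i j - P i j)\<^sup>2)"
  define TT where "TT = (\<Sum>j<q. T1n1 n (\<lambda>k. X k j))"
  define d2 :: "mat \<times> mat" where "d2 = ((\<lambda>i k'. 0), (\<lambda>k' j'. if k' = k \<and> j' = j then -1 else 0))"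
  have f0: "f (W, X) = S0 / 2 + \<eta>1/2 * SW + \<eta>2/2 * SX + \<gamma> * TT"
    by (simp add: f_def objF_def frob_sq P_def SW_def SX_def TT_def S0_def)
  have d2f: "d2 \<in> feas_cone (consC p n q) (W, X)"
    unfolding feas_cone_def
  proof (intro CollectI exI[of _ "X k j"] conjI allI impI)
    fix s :: real assume s: "0 < s \<and> s < X k j"
    have "\<And>k' j'. k' < n \<Longrightarrow> j' < q \<Longrightarrow> 0 \<le> X k' j' + s * (if k' = k \<and> j' = j then -1 else 0)"
      using Xnn s by auto
    thus "zstep (W, X) s d2 \<in> consC p n q"
      using inC unfolding zstep_def d2_def consC_def by auto
  qed (use xpos in simp)
  define g where "g = (\<lambda>s::real. (\<Sum>i<p. (A i j - P i j) * W i k + s/2 * (W i k)\<^sup>2) + \<eta>2/2*(s - 2 * X k j) - \<gamma>)"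
  have q: "(f (zstep (W, X) s d2) - f (W, X)) / s \<le> g s" if s: "0 < s \<and> s < X k j" for s
  proof -
    define X' where "X' = (\<lambda>k' j'. if k' = k \<and> j' = j then X k' j' - s else X k' j')"
    have zs: "zstep (W, X) s d2 = (W, X')"
      by (auto simp: zstep_def d2_def X'_def fun_eq_iff)
    have mm: "matmul n W X' i j' = P i j' - (if j' = j then s * W i k else 0)" for i j'
    proof -
      have e: "\<And>k'. W i k' * X' k' j' = W i k' * X k' j' - (if k' = k then (if j' = j then s * W i k' else 0) else 0)"
        by (simp add: X'_def algebra_simps)
      have "matmul n W X' i j' = (\<Sum>k'<n. W i k' * X k' j' - (if k' = k then (if j' = j then s * W i k' else 0) else 0))"
        unfolding matmul_def by (intro sum.cong refl e)
      also have "\<dots> = P i j' - (if j' = j then s * W i k else 0)"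
        unfolding sum_subtractf using kn by (simp add: P_def matmul_def)
      finally show ?thesis .
    qed
    define Sg where "Sg = (\<Sum>i<p. (A i j - P i j) * W i k + s/2 * (W i k)\<^sup>2)"
    have rr: "(\<Sum>i<p. \<Sum>j'<q. (A i j' - (P i j' - (if j' = j then s * W i k else 0)))\<^sup>2) = S0 + 2 * s * Sg"
    proof -
      have e: "\<And>i j'. (A i j' - (P i j' - (if j' = j then s * W i k else 0)))\<^sup>2 =
          (A i j' - P i j')\<^sup>2 + (if j' = j then 2 * s * ((A i j - P i j) * W i k + s/2 * (W i k)\<^sup>2) else 0)"
        by (auto simp: power2_eq_square algebra_simps)
      have "(\<Sum>i<p. \<Sum>j'<q. (A i j' - (P i j' - (if j' = j then s * W i k else 0)))\<^sup>2)
          = (\<Sum>i<p. (\<Sum>j'<q. (A i j' - P i j')\<^sup>2) + 2 * s * ((A i j - P i j) * W i k + s/2 * (W i k)\<^sup>2))"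
        unfolding e sum.distrib using jq by simp
      also have "\<dots> = S0 + (\<Sum>i<p. 2 * s * ((A i j - P i j) * W i k + s/2 * (W i k)\<^sup>2))"
        by (simp only: sum.distrib S0_def)
      also have "\<dots> = S0 + 2 * s * Sg"
        by (simp only: Sg_def sum_distrib_left)
      finally show ?thesis .
    qed
    have xx: "(\<Sum>k'<n. \<Sum>j'<q. (X' k' j')\<^sup>2) = SX + s * (s - 2 * X k j)"
    proof -
      have e: "\<And>k' j'. (X' k' j')\<^sup>2 = (X k' j')\<^sup>2 + (if j' = j then (if k' = k then s * (s - 2 * X k' j') else 0) else 0)"
        by (auto simp: X'_def power2_eq_square algebra_simps)
      show ?thesis unfolding e sum.distrib SX_def using jq kn by simp
    qed
    have tcol: "T1n1 n (\<lambda>k'. X' k' j) \<le> T1n1 n (\<lambda>k'. X k' j) - s"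
    proof -
      have n1: "n \<ge> 1" using kn by simp
      have ab: "\<And>i. \<bar>X' i j\<bar> = \<bar>X i j\<bar> - (if i = k then s else 0)"
        using s xpos by (auto simp: X'_def)
      have sm: "(\<Sum>i<n. \<bar>X' i j\<bar>) = (\<Sum>i<n. \<bar>X i j\<bar>) - s"
        unfolding ab sum_subtractf using kn by simp
      have "Max ((\<lambda>i. \<bar>X i j\<bar>) ` {..<n}) = \<bar>X' m j\<bar>" using Mx mk by (simp add: X'_def)
      also have "\<dots> \<le> Max ((\<lambda>i. \<bar>X' i j\<bar>) ` {..<n})" using mn by (intro Max_ge) auto
      finally have mx: "Max ((\<lambda>i. \<bar>X i j\<bar>) ` {..<n}) \<le> Max ((\<lambda>i. \<bar>X' i j\<bar>) ` {..<n})" .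
      show ?thesis unfolding T1n1_eq[OF n1] sm using mx by simp
    qed
    have tt: "(\<Sum>j'<q. T1n1 n (\<lambda>k'. X' k' j')) \<le> TT - s"
    proof -
      have "(\<Sum>j'<q. T1n1 n (\<lambda>k'. X' k' j')) = T1n1 n (\<lambda>k'. X' k' j) + (\<Sum>j'\<in>{..<q} - {j}. T1n1 n (\<lambda>k'. X' k' j'))"
        using jq by (simp add: sum.remove)
      also have "(\<Sum>j'\<in>{..<q} - {j}. T1n1 n (\<lambda>k'. X' k' j')) = (\<Sum>j'\<in>{..<q} - {j}. T1n1 n (\<lambda>k'. X k' j'))"
        by (intro sum.cong refl) (auto simp: X'_def)
      also have "TT = T1n1 n (\<lambda>k'. X k' j) + (\<Sum>j'\<in>{..<q} - {j}. T1n1 n (\<lambda>k'. X k' j'))"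
        unfolding TT_def using jq by (simp add: sum.remove)
      ultimately show ?thesis using tcol by linarith
    qed
    have fs: "f (zstep (W, X) s d2) = (S0 + 2 * s * Sg) / 2 + \<eta>1/2 * SW + \<eta>2/2 * (SX + s * (s - 2 * X k j)) + \<gamma> * (\<Sum>j'<q. T1n1 n (\<lambda>k'. X' k' j'))"
      unfolding zs f_def objF_def Let_def fst_conv snd_conv frob_sq mm rr xx SW_def by simp
    have gs: "g s = Sg + \<eta>2/2*(s - 2 * X k j) - \<gamma>" unfolding g_def Sg_def by simp
    have "f (zstep (W, X) s d2) - f (W, X) \<le> s * g s"
    proof -
      have "\<gamma> * (\<Sum>j'<q. T1n1 n (\<lambda>k'. X' k' j')) \<le> \<gamma> * (TT - s)"
        using tt gam by simp
      moreover have "(S0 + 2 * s * Sg) / 2 + \<eta>1/2 * SW + \<eta>2/2 * (SX + s * (s - 2 * X k j)) + \<gamma> * (TT - s)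
         - (S0 / 2 + \<eta>1/2 * SW + \<eta>2/2 * SX + \<gamma> * TT) = s * (Sg + \<eta>2/2*(s - 2 * X k j) - \<gamma>)"
        by (simp add: field_simps)
      ultimately show ?thesis unfolding fs f0 gs by linarith
    qed
    thus ?thesis using s by (simp add: divide_le_eq mult.commute)
  qed
  have lim: "(g \<longlongrightarrow> (\<Sum>i<p. (A i j - P i j) * W i k) - \<eta>2 * X k j - \<gamma>) (at_right 0)"
  proof -
    have "(g \<longlongrightarrow> (\<Sum>i<p. (A i j - P i j) * W i k + 0/2 * (W i k)\<^sup>2) + \<eta>2/2*(0 - 2 * X k j) - \<gamma>) (at_right 0)"
      unfolding g_def by (intro tendsto_intros) auto
    thus ?thesis by simp
  qed
  have "0 \<le> (\<Sum>i<p. (A i j - P i j) * W i k) - \<eta>2 * X k j - \<gamma>"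
    by (rule dir_le[OF stat[folded f_def] d2f xpos _ lim]) (use q in auto)
  thus ?thesis unfolding P_def by simp
qed
theorem mainTheorem12:
  fixes p n q :: nat and A W X :: mat and \<eta>1 \<eta>2 \<gamma> :: real
  assumes A_nonneg: "\<forall>i<p. \<forall>j<q. A i j \<ge> 0"
    and eta1: "\<eta>1 > 0" and eta2: "\<eta>2 > 0" and gam: "\<gamma> > 0"
    and stat: "d_stationary (objF p n q A \<eta>1 \<eta>2 \<gamma>) (consC p n q) (W, X)"
    and gam_big: "\<forall>j<q. \<gamma> > colnorm p A j / sqrt 2 * (frob p q A / sqrt \<eta>1 + sqrt \<eta>2)"
  shows "\<forall>j<q. T1n1 n (\<lambda>k. X k j) = 0"
proof (intro allI impI)
  fix j assume jq: "j < q"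
  have inC: "(W, X) \<in> consC p n q" using stat unfolding d_stationary_def by blast
  hence Wnn: "\<And>i k. i < p \<Longrightarrow> k < n \<Longrightarrow> W i k \<ge> 0"
    and Xnn: "\<And>k j. k < n \<Longrightarrow> j < q \<Longrightarrow> X k j \<ge> 0" unfolding consC_def by auto
  show "T1n1 n (\<lambda>k. X k j) = 0"
  proof (rule ccontr)
    assume ne: "T1n1 n (\<lambda>k. X k j) \<noteq> 0"
    have n1: "n \<ge> 1"
    proof (rule ccontr)
      assume "\<not> n \<ge> 1" hence "n = 0" by simp
      thus False using ne by (simp add: T1n1_def)
    qed
    have "Max ((\<lambda>i. \<bar>X i j\<bar>) ` {..<n}) \<in> (\<lambda>i. \<bar>X i j\<bar>) ` {..<n}"
      using n1 by (intro Max_in) (auto simp: lessThan_empty_iff)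
    then obtain m where mn: "m < n" and Mx: "\<bar>X m j\<bar> = Max ((\<lambda>i. \<bar>X i j\<bar>) ` {..<n})" by auto
    have "T1n1 n (\<lambda>k. X k j) = (\<Sum>i\<in>{..<n} - {m}. \<bar>X i j\<bar>)"
      unfolding T1n1_eq[OF n1] Mx[symmetric] using mn by (simp add: sum.remove)
    with ne have "(\<Sum>i\<in>{..<n} - {m}. \<bar>X i j\<bar>) \<noteq> 0" by simp
    then obtain k where kin: "k \<in> {..<n} - {m}" and xk: "\<bar>X k j\<bar> \<noteq> 0"
      by (meson sum.neutral)
    have kn: "k < n" and mk: "m \<noteq> k" using kin by auto
    have xpos: "X k j > 0" using Xnn[OF kn jq] xk by simp
    have g1: "\<gamma> \<le> (\<Sum>i<p. (A i j - matmul n W X i j) * W i k) - \<eta>2 * X k j"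
      by (rule step2[OF stat jq kn mn mk xpos gam Mx])
    have "(\<Sum>i<p. (A i j - matmul n W X i j) * W i k) \<le> (\<Sum>i<p. A i j * W i k)"
    proof (intro sum_mono)
      fix i assume "i \<in> {..<p}" hence ip: "i < p" by simp
      have "matmul n W X i j \<ge> 0" unfolding matmul_def
        using Wnn[OF ip] Xnn[OF _ jq] by (intro sum_nonneg) auto
      moreover have "W i k \<ge> 0" using Wnn[OF ip kn] .
      ultimately show "(A i j - matmul n W X i j) * W i k \<le> A i j * W i k"
        by (simp add: algebra_simps)
    qed
    also have "\<dots> \<le> L2_set (\<lambda>i. A i j) {..<p} * L2_set (\<lambda>i. W i k) {..<p}"
    proof -
      have "(\<Sum>i<p. A i j * W i k) = (\<Sum>i<p. \<bar>A i j\<bar> * \<bar>W i k\<bar>)"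
        using A_nonneg jq Wnn kn by (intro sum.cong refl) auto
      thus ?thesis using L2_set_mult_ineq by metis
    qed
    finally have g2': "(\<Sum>i<p. (A i j - matmul n W X i j) * W i k) \<le> colnorm p A j * sqrt (\<Sum>i<p. (W i k)\<^sup>2)"
      by (simp add: colnorm_def L2_set_def)
    have "0 \<le> \<eta>2 * X k j" using xpos eta2 by simp
    hence g2: "\<gamma> \<le> colnorm p A j * sqrt (\<Sum>i<p. (W i k)\<^sup>2)" using g1 g2' by linarith
    define SW where "SW = (\<Sum>i<p. \<Sum>k<n. (W i k)\<^sup>2)"
    define SA where "SA = (\<Sum>i<p. \<Sum>j<q. (A i j)\<^sup>2)"
    have "(\<Sum>i<p. (W i k)\<^sup>2) \<le> SW" unfolding SW_def
      using kn by (intro sum_mono member_le_sum) auto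
    moreover have "\<eta>1 * SW \<le> SA / 4" unfolding SW_def SA_def by (rule step1[OF stat])
    ultimately have "\<eta>1 * (\<Sum>i<p. (W i k)\<^sup>2) \<le> SA / 4"
      using eta1 mult_left_mono[of "(\<Sum>i<p. (W i k)\<^sup>2)" SW \<eta>1] by linarith
    hence "(\<Sum>i<p. (W i k)\<^sup>2) \<le> SA / (4 * \<eta>1)"
      using eta1 by (simp add: field_simps)
    hence "sqrt (\<Sum>i<p. (W i k)\<^sup>2) \<le> sqrt (SA / (4 * \<eta>1))" by simp
    also have "\<dots> = frob p q A / (2 * sqrt \<eta>1)"
      by (simp add: frob_def SA_def real_sqrt_divide real_sqrt_mult)
    finally have sw: "sqrt (\<Sum>i<p. (W i k)\<^sup>2) \<le> frob p q A / (2 * sqrt \<eta>1)" .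
    define c where "c = colnorm p A j"
    define a where "a = frob p q A / sqrt \<eta>1"
    have c0: "c \<ge> 0" unfolding c_def colnorm_def by (simp add: sum_nonneg)
    have a0: "a \<ge> 0" unfolding a_def frob_def using eta1 by (simp add: sum_nonneg)
    have e: "frob p q A / (2 * sqrt \<eta>1) = a / 2" unfolding a_def by simp
    have h: "c * sqrt (\<Sum>i<p. (W i k)\<^sup>2) \<le> c * (a / 2)"
      using mult_left_mono[OF sw c0] unfolding e .
    have "\<gamma> \<le> c * (a / 2)" using g2 h unfolding c_def by linarith
    also have "\<dots> = c * a / 2" by simp
    also have "\<dots> \<le> c * a / sqrt 2"
    proof (rule divide_left_mono)
      show "sqrt 2 \<le> 2" using real_sqrt_le_iff[of 2 4] by simp
    qed (use c0 a0 in auto)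
    also have "\<dots> \<le> c / sqrt 2 * (a + sqrt \<eta>2)"
    proof -
      have "0 \<le> c / sqrt 2 * sqrt \<eta>2" using c0 eta2 by simp
      moreover have "c / sqrt 2 * (a + sqrt \<eta>2) = c * a / sqrt 2 + c / sqrt 2 * sqrt \<eta>2"
        by (simp add: distrib_left)
      ultimately show ?thesis by linarith
    qed
    finally have "\<gamma> \<le> c / sqrt 2 * (a + sqrt \<eta>2)" .
    moreover have "\<gamma> > c / sqrt 2 * (a + sqrt \<eta>2)" using gam_big jq unfolding c_def a_def by blast
    ultimately show False by linarith
  qed
qed
end
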